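(* Let $L\ge1$, $\sigma_1,\dots,\sigma_L\in\mathfrak S_{2k}$, $\varepsilon_1,\dots,\varepsilon_L\in\{1,*\}$, let $T=T^{\varepsilon_1,\dots,\varepsilon_L}_{\sigma_1,\dots,\sigma_L}$ be the strip hypergraph and let $\pi$ be any partition of its vertex set $V$. Then $q(\pi,0)\le0$ and the sequence $(q(\pi,\ell))_{\ell=0,\dots,L}$ is non-increasing. In particular $-k-k|\bar E^\pi|+|V^\pi|=q(\pi,L)\le0$, where $(V^\pi,\bar E^\pi)$ is the skeleton of $T^\pi$.
   Context: Fix $k\ge1$; $\mathfrak S_{2k}$ is the symmetric group on $\{1,\dots,2k\}$. A $*$-test hypergraph $(V,E,\sigma,\varepsilon)$ consists of a finite vertex set $V$, a finite multiset $E$ of hyperedges $e=(v_1,\dots,v_{2k})\in V^{2k}$ (the first $k$ entries are the inputs, the last $k$ the outputs), and labels $\sigma(e)\in\mathfrak S_{2k}$, $\varepsilon(e)\in\{1,*\}$. Strip hypergraph $T=T^{\varepsilon_1,\dots,\varepsilon_L}_{\sigma_1,\dots,\sigma_L}$: $V=\{(i,\ell):i\in[k],\ell\in[L]\}$, hyperedges $e_\ell=((1,\ell+1),\dots,(k,\ell+1),(1,\ell),\dots,(k,\ell))$ for $\ell\in[L]$ (each with multiplicity one), with the convention $(i,L+1)=(i,1)$, labels $\sigma(e_\ell)=\sigma_\ell$, $\varepsilon(e_\ell)=\varepsilon_\ell$. For $0\le\ell\le L-1$, $S_\ell$ is the hypergraph with vertex set $V_\ell=\{(i,j):i\in[k],j\in[\ell+1]\}$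 and hyperedges $e_1,\dots,e_\ell$; $S_L=T$. A partition $\pi$ of $V$ induces (by restriction) a partition of each $V_\ell$ and thus a quotient $S_\ell^\pi$: its vertices are the blocks of the restricted partition, and each hyperedge $(v_1,\dots,v_{2k})$ becomes $(B_1,\dots,B_{2k})$ with $v_s\in B_s$. The skeleton of a quotient with vertex set $V^\pi_\ell$ and hyperedges $E^\pi_\ell$ is the pair $(V^\pi_\ell,\bar E^\pi_\ell)$, where $\bar E^\pi_\ell$ is the set (without multiplicity) of the underlying vertex sets $\{B_1,\dots,B_{2k}\}$ of the hyperedges $(B_1,\dots,B_{2k})\in E^\pi_\ell$. Define $q(\pi,\ell)=-k-k|\bar E^\pi_\ell|+|V^\pi_\ell|$ for $\ell=0,\dots,L$. *)

theory Defs
  imports "HOL-Combinatorics.Permutations" "HOL-Library.Disjoint_Sets"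
begin

text \<open>A *-test hypergraph: a vertex set together with a list of hyperedges (list = multiset,
  order irrelevant).  Each hyperedge is a tuple (list of length 2k) of vertices, with its labels:
  a permutation sigma of {1..2k} and epsilon (True meaning *, False meaning 1).\<close>
type_synonym 'v hypergraph = "'v set \<times> ('v list \<times> (nat \<Rightarrow> nat) \<times> bool) list"

definition restrict_partition :: "'v set set \<Rightarrow> 'v set \<Rightarrow> 'v set set" where
  "restrict_partition P W = {B \<inter> W | B. B \<in> P \<and> B \<inter> W \<noteq> {}}"

definition block_of :: "'v set set \<Rightarrow> 'v \<Rightarrow> 'v set" where
  "block_of Q v = (THE B. B \<in> Q \<and> v \<in> B)"

definition quot_vertices :: "'v set set \<Rightarrow> 'v hypergraph \<Rightarrow> 'v set set" where
  "quot_vertices P H = restrict_partition P (fst H)"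

definition quot_edges :: "'v set set \<Rightarrow> 'v hypergraph \<Rightarrow> ('v set list \<times> (nat \<Rightarrow> nat) \<times> bool) list" where
  "quot_edges P H = map (\<lambda>(e, s, t). (map (block_of (quot_vertices P H)) e, s, t)) (snd H)"

definition skel_edges :: "'v set set \<Rightarrow> 'v hypergraph \<Rightarrow> 'v set set set" where
  "skel_edges P H = (\<lambda>(e, s, t). set e) ` set (quot_edges P H)"

definition qval :: "nat \<Rightarrow> 'v set set \<Rightarrow> 'v hypergraph \<Rightarrow> int" where
  "qval k P H = - int k - int k * int (card (skel_edges P H)) + int (card (quot_vertices P H))"

definition strip_vertices :: "nat \<Rightarrow> nat \<Rightarrow> (nat \<times> nat) set" where
  "strip_vertices k L = {1..k} \<times> {1..L}"

definition strip_edge :: "nat \<Rightarrow> nat \<Rightarrow> nat \<Rightarrow> (nat \<times> nat) list" where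
  "strip_edge k L l =
     map (\<lambda>i. (i, if l = L then 1 else l + 1)) [1..<k+1] @ map (\<lambda>i. (i, l)) [1..<k+1]"

definition strip_labelled_edges ::
  "nat \<Rightarrow> nat \<Rightarrow> (nat \<Rightarrow> nat \<Rightarrow> nat) \<Rightarrow> (nat \<Rightarrow> bool) \<Rightarrow> nat \<Rightarrow>
   ((nat \<times> nat) list \<times> (nat \<Rightarrow> nat) \<times> bool) list" where
  "strip_labelled_edges k L \<sigma> \<epsilon> m = map (\<lambda>l. (strip_edge k L l, \<sigma> l, \<epsilon> l)) [1..<m+1]"

definition strip_hypergraph ::
  "nat \<Rightarrow> nat \<Rightarrow> (nat \<Rightarrow> nat \<Rightarrow> nat) \<Rightarrow> (nat \<Rightarrow> bool) \<Rightarrow> (nat \<times> nat) hypergraph" where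
  "strip_hypergraph k L \<sigma> \<epsilon> = (strip_vertices k L, strip_labelled_edges k L \<sigma> \<epsilon> L)"

definition strip_partial ::
  "nat \<Rightarrow> nat \<Rightarrow> (nat \<Rightarrow> nat \<Rightarrow> nat) \<Rightarrow> (nat \<Rightarrow> bool) \<Rightarrow> nat \<Rightarrow> (nat \<times> nat) hypergraph" where
  "strip_partial k L \<sigma> \<epsilon> l =
     (if l = L then strip_hypergraph k L \<sigma> \<epsilon>
      else ({1..k} \<times> {1..l+1}, strip_labelled_edges k L \<sigma> \<epsilon> l))"

end

theory Submission
  imports Defs
begin

lemma part_uniq:
  assumes "partition_on V P" "B \<in> P" "B' \<in> P" "v \<in> B" "v \<in> B'"
  shows "B = B'"
proof (rule ccontr)
  assume "B \<noteq> B'"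
  hence "B \<inter> B' = {}" using disjointD[OF partition_onD2[OF assms(1)] assms(2,3)] by simp
  thus False using assms(4,5) by blast
qed

lemma part_ex:
  assumes "partition_on V P" "v \<in> V"
  obtains B where "B \<in> P" "v \<in> B"
  using partition_onD1[OF assms(1)] assms(2) by blast

lemma block_of_P_unique:
  assumes "partition_on V P" "B \<in> P" "v \<in> B"
  shows "block_of P v = B"
  unfolding block_of_def
proof (rule the_equality)
  show "B \<in> P \<and> v \<in> B" using assms by simp
  fix B' assume "B' \<in> P \<and> v \<in> B'"
  thus "B' = B" using part_uniq[OF assms(1)] assms(2,3) by blast
qed

lemma block_of_P:
  assumes "partition_on V P" "v \<in> V"
  shows "block_of P v \<in> P \<and> v \<in> block_of P v"
proof -
  obtain B where B: "B \<in> P" "v \<in> B" using part_ex[OF assms] by blast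
  have "block_of P v = B" by (rule block_of_P_unique[OF assms(1) B])
  thus ?thesis using B by simp
qed

lemma mem_restrict: "X \<in> restrict_partition P W \<longleftrightarrow> (\<exists>B. X = B \<inter> W \<and> B \<in> P \<and> B \<inter> W \<noteq> {})"
  unfolding restrict_partition_def by simp

lemma block_of_restrict:
  assumes "partition_on V P" "W \<subseteq> V" "v \<in> W"
  shows "block_of (restrict_partition P W) v = block_of P v \<inter> W"
proof -
  have vV: "v \<in> V" using assms by auto
  have b: "block_of P v \<in> P" "v \<in> block_of P v" using block_of_P[OF assms(1) vV] by auto
  show ?thesis unfolding block_of_def[of "restrict_partition P W"]
  proof (rule the_equality)
    have "block_of P v \<inter> W \<in> restrict_partition P W"
      unfolding mem_restrict using b assms(3) by blast
    thus "block_of P v \<inter> W \<in> restrict_partition P W \<and> v \<in> block_of P v \<inter> W"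
      using b(2) assms(3) by simp
  next
    fix B assume h: "B \<in> restrict_partition P W \<and> v \<in> B"
    then obtain B0 where B0: "B = B0 \<inter> W" "B0 \<in> P" unfolding mem_restrict by blast
    hence "v \<in> B0" using h by simp
    hence "block_of P v = B0" using block_of_P_unique[OF assms(1) B0(2)] by simp
    thus "B = block_of P v \<inter> W" using B0 by simp
  qed
qed

lemma inj_cap:
  assumes "partition_on V P" "W \<subseteq> V"
  shows "inj_on (\<lambda>B. B \<inter> W) (block_of P ` W)"
proof (rule inj_onI)
  fix B1 B2 assume "B1 \<in> block_of P ` W" "B2 \<in> block_of P ` W" and eq: "B1 \<inter> W = B2 \<inter> W"
  then obtain v1 v2 where v: "v1 \<in> W" "v2 \<in> W" "B1 = block_of P v1" "B2 = block_of P v2" by blast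
  have "v1 \<in> B1" "B1 \<in> P" "B2 \<in> P" using block_of_P[OF assms(1)] v assms(2) by blast+
  hence "v1 \<in> B2" using eq v(1) by blast
  thus "B1 = B2" using block_of_P_unique[OF assms(1) \<open>B2 \<in> P\<close>] block_of_P_unique[OF assms(1) \<open>B1 \<in> P\<close> \<open>v1 \<in> B1\<close>] by simp
qed

definition FE :: "(nat \<times> nat) set set \<Rightarrow> ((nat \<times> nat) list \<times> (nat \<Rightarrow> nat) \<times> bool) list \<Rightarrow> (nat \<times> nat) set set set" where
  "FE P E = (\<lambda>(e, s, t). block_of P ` set e) ` set E"

lemma qv_eq:
  assumes "partition_on V P" "W \<subseteq> V"
  shows "restrict_partition P W = (\<lambda>B. B \<inter> W) ` (block_of P ` W)"
proof
  show "restrict_partition P W \<subseteq> (\<lambda>B. B \<inter> W) ` (block_of P ` W)"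
  proof
    fix X assume "X \<in> restrict_partition P W"
    then obtain B where B: "X = B \<inter> W" "B \<in> P" "B \<inter> W \<noteq> {}" unfolding mem_restrict by blast
    then obtain v where v: "v \<in> B" "v \<in> W" by blast
    have "block_of P v = B" using block_of_P_unique[OF assms(1) B(2) v(1)] .
    hence "X = (\<lambda>B. B \<inter> W) (block_of P v)" using B(1) by simp
    thus "X \<in> (\<lambda>B. B \<inter> W) ` (block_of P ` W)" using v(2) by blast
  qed
next
  show "(\<lambda>B. B \<inter> W) ` (block_of P ` W) \<subseteq> restrict_partition P W"
  proof
    fix X assume "X \<in> (\<lambda>B. B \<inter> W) ` (block_of P ` W)"
    then obtain v where v: "v \<in> W" "X = block_of P v \<inter> W" by blast
    have "v \<in> V" using v assms(2) by blast
    hence "block_of P v \<in> P" "v \<in> block_of P v" using block_of_P[OF assms(1)] by auto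
    thus "X \<in> restrict_partition P W" unfolding mem_restrict using v by blast
  qed
qed

lemma qval_repr:
  assumes "partition_on V P" "W \<subseteq> V"
    and "\<forall>(e, s, t) \<in> set E. set e \<subseteq> W"
  shows "qval k P (W, E) = - int k - int k * int (card (FE P E)) + int (card (block_of P ` W))"
proof -
  have qv: "quot_vertices P (W, E) = (\<lambda>B. B \<inter> W) ` (block_of P ` W)"
    unfolding quot_vertices_def using qv_eq[OF assms(1,2)] by simp
  have c1: "card (quot_vertices P (W, E)) = card (block_of P ` W)"
    unfolding qv by (rule card_image[OF inj_cap[OF assms(1,2)]])
  have edge: "set (map (block_of (quot_vertices P (W, E))) e) = (\<lambda>B. B \<inter> W) ` (block_of P ` set e)"
    if "set e \<subseteq> W" for e
  proof -
    have "\<And>v. v \<in> set e \<Longrightarrow> block_of (quot_vertices P (W, E)) v = block_of P v \<inter> W"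
      using block_of_restrict[OF assms(1,2)] that unfolding quot_vertices_def by auto
    thus ?thesis by (simp add: image_image)
  qed
  have sk: "skel_edges P (W, E) = (`) (\<lambda>B. B \<inter> W) ` FE P E"
  proof -
    have "skel_edges P (W, E) = (\<lambda>(e, s, t). set (map (block_of (quot_vertices P (W, E))) e)) ` set E"
      unfolding skel_edges_def quot_edges_def by (simp add: image_image case_prod_beta)
    also have "\<dots> = (\<lambda>(e, s, t). (\<lambda>B. B \<inter> W) ` (block_of P ` set e)) ` set E"
    proof (rule image_cong[OF refl])
      fix x assume "x \<in> set E"
      then obtain e s t where x: "x = (e, s, t)" "(e, s, t) \<in> set E" using prod_cases3[of x] by blast
      hence "set e \<subseteq> W" using assms(3) by auto
      thus "(\<lambda>(e, s, t). set (map (block_of (quot_vertices P (W, E))) e)) x =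
            (\<lambda>(e, s, t). (\<lambda>B. B \<inter> W) ` (block_of P ` set e)) x"
        using edge x(1) by simp
    qed
    also have "\<dots> = (`) (\<lambda>B. B \<inter> W) ` FE P E"
      unfolding FE_def by (simp add: image_image case_prod_beta)
    finally show ?thesis .
  qed
  have "inj_on ((`) (\<lambda>B. B \<inter> W)) (FE P E)"
  proof (rule inj_on_image)
    have "\<Union> (FE P E) \<subseteq> block_of P ` W" using assms(3) unfolding FE_def by fastforce
    thus "inj_on (\<lambda>B. B \<inter> W) (\<Union> (FE P E))" using inj_on_subset[OF inj_cap[OF assms(1,2)]] by blast
  qed
  hence c2: "card (skel_edges P (W, E)) = card (FE P E)" unfolding sk by (rule card_image)
  show ?thesis unfolding qval_def c1 c2 ..
qed

lemma step_ineq: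
  assumes "finite W" "finite N" "card N \<le> k" "N \<subseteq> set e" "set e \<subseteq> W \<union> N"
    and "\<forall>(e0, s, t) \<in> set E. set e0 \<subseteq> W"
  shows "- int k - int k * int (card (FE P (E @ [(e, s, t)]))) + int (card (block_of P ` (W \<union> N)))
       \<le> - int k - int k * int (card (FE P E)) + int (card (block_of P ` W))"
proof -
  have fin: "finite (FE P E)" unfolding FE_def by simp
  have ins: "FE P (E @ [(e, s, t)]) = insert (block_of P ` set e) (FE P E)" unfolding FE_def by simp
  show ?thesis
  proof (cases "block_of P ` set e \<in> FE P E")
    case True
    obtain x0 where x0': "block_of P ` set e = (\<lambda>(e, s, t). block_of P ` set e) x0" "x0 \<in> set E"
      using True unfolding FE_def by (rule imageE)
    note x0 = x0'(2) x0'(1)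
    obtain e0 s0 t0 where x0e: "x0 = (e0, s0, t0)" using prod_cases3 by blast
    have e0W: "set e0 \<subseteq> W" using assms(6) x0(1) x0e by auto
    have eq: "block_of P ` set e = block_of P ` set e0" using x0(2) x0e by simp
    have "block_of P ` N \<subseteq> block_of P ` set e" using assms(4) by (rule image_mono)
    also have "\<dots> \<subseteq> block_of P ` W" unfolding eq using e0W by (rule image_mono)
    finally have "block_of P ` (W \<union> N) = block_of P ` W" by (simp add: image_Un Un_absorb2)
    moreover have "FE P (E @ [(e, s, t)]) = FE P E" using ins True by (simp add: insert_absorb)
    ultimately show ?thesis by simp
  next
    case False
    have "card (FE P (E @ [(e, s, t)])) = card (FE P E) + 1" using ins False fin by simp
    moreover have "card (block_of P ` (W \<union> N)) \<le> card (block_of P ` W) + k"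
    proof -
      have "card (block_of P ` (W \<union> N)) \<le> card (block_of P ` W) + card (block_of P ` N)"
        by (simp add: image_Un card_Un_le)
      also have "card (block_of P ` N) \<le> card N" by (rule card_image_le[OF assms(2)])
      finally show ?thesis using assms(3) by simp
    qed
    ultimately show ?thesis by (simp add: algebra_simps)
  qed
qed

lemma set_strip_edge:
  "set (strip_edge k L l) = {1..k} \<times> {if l = L then 1 else l + 1} \<union> {1..k} \<times> {l}"
  unfolding strip_edge_def by auto

lemma labelled_Suc:
  "strip_labelled_edges k L \<sigma> \<epsilon> (Suc m) = strip_labelled_edges k L \<sigma> \<epsilon> m @ [(strip_edge k L (Suc m), \<sigma> (Suc m), \<epsilon> (Suc m))]"
  unfolding strip_labelled_edges_def by simp

lemma labelled_sub:
  assumes "m < L"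
  shows "\<forall>(e, s, t) \<in> set (strip_labelled_edges k L \<sigma> \<epsilon> m). set e \<subseteq> {1..k} \<times> {1..m+1}"
  using assms unfolding strip_labelled_edges_def by (auto simp: set_strip_edge)

theorem mainTheorem16:
  fixes k L :: nat and \<sigma> :: "nat \<Rightarrow> nat \<Rightarrow> nat" and \<epsilon> :: "nat \<Rightarrow> bool"
    and P :: "(nat \<times> nat) set set"
  assumes "k \<ge> 1" and "L \<ge> 1"
    and "\<forall>l \<in> {1..L}. \<sigma> l permutes {1..2*k}"
    and "partition_on (strip_vertices k L) P"
  shows "qval k P (strip_partial k L \<sigma> \<epsilon> 0) \<le> 0
       \<and> (\<forall>l < L. qval k P (strip_partial k L \<sigma> \<epsilon> (l+1)) \<le> qval k P (strip_partial k L \<sigma> \<epsilon> l))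
       \<and> qval k P (strip_hypergraph k L \<sigma> \<epsilon>) = qval k P (strip_partial k L \<sigma> \<epsilon> L)
       \<and> qval k P (strip_hypergraph k L \<sigma> \<epsilon>) \<le> 0"
proof -
  define V where "V = strip_vertices k L"
  have part: "partition_on V P" using assms(4) V_def by simp
  define Q where "Q l = qval k P (strip_partial k L \<sigma> \<epsilon> l)" for l
  have q0: "Q 0 \<le> 0"
  proof -
    have sp: "strip_partial k L \<sigma> \<epsilon> 0 = ({1..k} \<times> {1}, [])"
      using assms(2) unfolding strip_partial_def strip_labelled_edges_def by auto
    have sub: "{1..k} \<times> {1} \<subseteq> V" using assms(2) unfolding V_def strip_vertices_def by auto
    have "Q 0 = - int k - int k * int (card (FE P [])) + int (card (block_of P ` ({1..k} \<times> {1::nat})))"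
      unfolding Q_def sp by (rule qval_repr[OF part sub]) simp
    moreover have "card (block_of P ` ({1..k} \<times> {1::nat})) \<le> card ({1..k} \<times> {1::nat})"
      by (rule card_image_le) simp
    moreover have "card ({1..k} \<times> {1::nat}) = k" by (simp add: card_cartesian_product)
    ultimately show ?thesis unfolding FE_def by simp
  qed
  have stepQ: "Q (l+1) \<le> Q l" if "l < L" for l
  proof -
    define W where "W = ({1..k} \<times> {1..l+1} :: (nat \<times> nat) set)"
    define E where "E = strip_labelled_edges k L \<sigma> \<epsilon> l"
    define N where "N = (if l + 1 = L then {} else ({1..k} \<times> {l+2} :: (nat \<times> nat) set))"
    have spl: "strip_partial k L \<sigma> \<epsilon> l = (W, E)" using that unfolding strip_partial_def W_def E_def by simp
    have spl1: "strip_partial k L \<sigma> \<epsilon> (l+1) = (W \<union> N, E @ [(strip_edge k L (Suc l), \<sigma> (Suc l), \<epsilon> (Suc l))])"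
      using that unfolding strip_partial_def strip_hypergraph_def W_def E_def N_def strip_vertices_def
      by (auto simp: labelled_Suc)
    have WV: "W \<subseteq> V" using that unfolding W_def V_def strip_vertices_def by auto
    have WNV: "W \<union> N \<subseteq> V" using that WV unfolding N_def V_def strip_vertices_def by auto
    have EW: "\<forall>(e, s, t) \<in> set E. set e \<subseteq> W" using labelled_sub[OF that] unfolding E_def W_def by blast
    have eW: "set (strip_edge k L (Suc l)) \<subseteq> W \<union> N"
      using that unfolding set_strip_edge W_def N_def by auto
    have EW1: "\<forall>(e, s, t) \<in> set (E @ [(strip_edge k L (Suc l), \<sigma> (Suc l), \<epsilon> (Suc l))]). set e \<subseteq> W \<union> N"
      using EW eW by auto
    have cN: "card N \<le> k" unfolding N_def by (simp add: card_cartesian_product)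
    have Ne: "N \<subseteq> set (strip_edge k L (Suc l))" unfolding N_def set_strip_edge using that by auto
    have "Q (l+1) = - int k - int k * int (card (FE P (E @ [(strip_edge k L (Suc l), \<sigma> (Suc l), \<epsilon> (Suc l))]))) + int (card (block_of P ` (W \<union> N)))"
      unfolding Q_def spl1 by (rule qval_repr[OF part WNV EW1])
    also have "\<dots> \<le> - int k - int k * int (card (FE P E)) + int (card (block_of P ` W))"
      by (rule step_ineq) (use cN Ne eW EW in \<open>auto simp: W_def N_def\<close>)
    also have "\<dots> = Q l" unfolding Q_def spl by (rule qval_repr[OF part WV EW, symmetric])
    finally show ?thesis .
  qed
  have chain: "Q l \<le> Q 0" if "l \<le> L" for l
    using that
  proof (induction l)
    case 0 then show ?case by simp
  next
    case (Suc l) then show ?case using stepQ[of l] by simp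
  qed
  have eqL: "strip_hypergraph k L \<sigma> \<epsilon> = strip_partial k L \<sigma> \<epsilon> L" unfolding strip_partial_def by simp
  show ?thesis using q0 stepQ chain[of L] eqL unfolding Q_def by simp
qed

end
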